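(* Let $I\subseteq\mathbb{R}_+$ be a nonempty, non-singleton interval and let $n\in\mathbb{N}$. If $\Phi: I\to\mathbb{R}_+$ is subadditive of order $n$, then $\Phi$ is also subadditive of order $n+1$.
   Context: $\mathbb{R}_+$ denotes the set of nonnegative real numbers. For $n\in\mathbb{N}$, a function $\Phi: I\to\mathbb{R}_+$ is called subadditive of order $n$ if for all $x,y\in I$ with $y>0$ and $x+y\in I$ one has $\Phi(x+y)\leq \Phi(x)+\frac{(x+y)^n-x^n}{y^n}\Phi(y)$. *)

theory Defs
  imports "HOL-Analysis.Analysis"
begin

definition subadditive_order :: "nat \<Rightarrow> real set \<Rightarrow> (real \<Rightarrow> real) \<Rightarrow> bool" where
  "subadditive_order n I \<Phi> \<longleftrightarrow>
     (\<forall>x\<in>I. \<forall>y\<in>I. y > 0 \<longrightarrow> x + y \<in> I \<longrightarrow>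
        \<Phi> (x + y) \<le> \<Phi> x + ((x + y) ^ n - x ^ n) / y ^ n * \<Phi> y)"

end

theory Submission
  imports Defs
begin

lemma coeff_mono:
  fixes x y :: real and n :: nat
  assumes "x \<ge> 0" "y > 0"
  shows "((x + y) ^ n - x ^ n) / y ^ n \<le> ((x + y) ^ (n+1) - x ^ (n+1)) / y ^ (n+1)"
proof -
  have p: "x ^ n \<le> (x + y) ^ n" using assms by (intro power_mono) auto
  have key: "y * ((x + y) ^ n - x ^ n) \<le> (x + y) ^ (n+1) - x ^ (n+1)"
  proof -
    have "(x + y) ^ (n+1) - x ^ (n+1) - y * ((x + y) ^ n - x ^ n)
          = x * ((x + y) ^ n - x ^ n) + y * x ^ n"
      by (simp add: algebra_simps)
    moreover have "x * ((x + y) ^ n - x ^ n) \<ge> 0" using p assms by simp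
    moreover have "y * x ^ n \<ge> 0" using assms by simp
    ultimately show ?thesis by linarith
  qed
  have yp: "y ^ n > 0" using assms by simp
  have "((x + y) ^ n - x ^ n) / y ^ n = (y * ((x + y) ^ n - x ^ n)) / y ^ (n+1)"
    using assms by (simp add: field_simps)
  also have "\<dots> \<le> ((x + y) ^ (n+1) - x ^ (n+1)) / y ^ (n+1)"
    using key assms by (intro divide_right_mono) auto
  finally show ?thesis .
qed

theorem theorem2p1:
  fixes I :: "real set" and n :: nat and \<Phi> :: "real \<Rightarrow> real"
  assumes "is_interval I" and "I \<subseteq> {0..}" and "I \<noteq> {}" and "\<not> (\<exists>a. I = {a})"
    and "n \<ge> 1"
    and "\<forall>x\<in>I. \<Phi> x \<ge> 0"
    and "subadditive_order n I \<Phi>"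
  shows "subadditive_order (n + 1) I \<Phi>"
  unfolding subadditive_order_def
proof (intro ballI impI)
  fix x y assume xI: "x \<in> I" and yI: "y \<in> I" and y0: "y > 0" and xyI: "x + y \<in> I"
  have x0: "x \<ge> 0" using xI assms(2) by auto
  have h: "\<Phi> (x + y) \<le> \<Phi> x + ((x + y) ^ n - x ^ n) / y ^ n * \<Phi> y"
    using assms(7) xI yI y0 xyI unfolding subadditive_order_def by blast
  have "((x + y) ^ n - x ^ n) / y ^ n * \<Phi> y \<le> ((x + y) ^ (n+1) - x ^ (n+1)) / y ^ (n+1) * \<Phi> y"
    using coeff_mono[OF x0 y0, of n] assms(6) yI by (intro mult_right_mono) auto
  then show "\<Phi> (x + y) \<le> \<Phi> x + ((x + y) ^ (n+1) - x ^ (n+1)) / y ^ (n+1) * \<Phi> y"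
    using h by linarith
qed

end
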